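(* Under the hypotheses of the Existence and Uniqueness lemma ($\mu\in\mathcal P_2(\mathbb R^d)$, $\phi^{\#}_\mu$ Fréchet differentiable, $\lambda$-convex and bounded below on $L^2(\mathbb R^d;\mu)$, $\tau>0$ with $\lambda/2+1/\tau>0$, $v\in L^2(\mathbb R^d;\mu)$), and assuming additionally $|\lambda|\tau<1$ when $\lambda<0$, the unique minimizer $\xi^*$ of $\Phi_{\tau,\mu,v}$ satisfies \[\|\nabla\phi^{\#}_\mu(\xi^* )\|^2_{L^2(\mathbb R^d;\mu)}\le\mathcal C(\lambda,\tau)\,\|\nabla\phi^{\#}_\mu(v)\|^2_{L^2(\mathbb R^d;\mu)},\qquad\mathcal C(\lambda,\tau):=\begin{cases}1,&\lambda\ge0,\\ e^{2|\lambda_\tau|\tau}=\frac{1-\lambda\tau}{1+\lambda\tau},&\lambda<0.\end{cases}\]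
   Context: $\lambda_\tau:=\frac1{2\tau}\log\frac{1+\lambda\tau}{1-\lambda\tau}$. $\phi^{\#}_\mu(\xi):=\phi(\xi_{\#}\mu)$ is the lift on $L^2(\mathbb R^d;\mu)$ (Hilbert space of $\mu$-square-integrable maps $\mathbb R^d\to\mathbb R^d$) with Fréchet gradient $\nabla\phi^{\#}_\mu$; $\lambda$-convexity: $F((1-t)\xi_1+t\xi_2)\le(1-t)F(\xi_1)+tF(\xi_2)-\frac\lambda2t(1-t)\|\xi_1-\xi_2\|^2$. $\Phi_{\tau,\mu,v}(\xi)=\tfrac12\big(\phi^{\#}_\mu(\xi)+\langle\nabla\phi^{\#}_\mu(v),\xi\rangle_{L^2(\mu)}\big)+\tfrac1{2\tau}\|\xi-v\|^2_{L^2(\mu)}$. *)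

theory Defs
  imports "HOL-Probability.Probability"
begin

text \<open>R^d is modelled by an arbitrary Euclidean space 'a. Elements of
L^2(R^d; mu) are represented by mu-measurable maps 'a => 'a with integrable
squared norm (a.e.-equal maps are not identified; all notions below respect
a.e.-equality).\<close>

definition P2 :: "'a::euclidean_space measure \<Rightarrow> bool" where
  "P2 \<mu> \<longleftrightarrow> prob_space \<mu> \<and> sets \<mu> = sets borel \<and> integrable \<mu> (\<lambda>x. (norm x)\<^sup>2)"

definition L2 :: "'a::euclidean_space measure \<Rightarrow> ('a \<Rightarrow> 'a) set" where
  "L2 \<mu> = {\<xi>. \<xi> \<in> borel_measurable \<mu> \<and> integrable \<mu> (\<lambda>x. (norm (\<xi> x))\<^sup>2)}"

definition l2_inner :: "'a::euclidean_space measure \<Rightarrow> ('a \<Rightarrow> 'a) \<Rightarrow> ('a \<Rightarrow> 'a) \<Rightarrow> real" where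
  "l2_inner \<mu> f g = (\<integral>x. inner (f x) (g x) \<partial>\<mu>)"

definition l2_norm :: "'a::euclidean_space measure \<Rightarrow> ('a \<Rightarrow> 'a) \<Rightarrow> real" where
  "l2_norm \<mu> f = sqrt (l2_inner \<mu> f f)"

definition lift :: "('a::euclidean_space measure \<Rightarrow> real) \<Rightarrow> 'a measure \<Rightarrow> ('a \<Rightarrow> 'a) \<Rightarrow> real" where
  "lift \<phi> \<mu> \<xi> = \<phi> (distr \<mu> borel \<xi>)"

definition has_L2_gradient ::
  "(('a::euclidean_space \<Rightarrow> 'a) \<Rightarrow> real) \<Rightarrow> 'a measure \<Rightarrow> ('a \<Rightarrow> 'a) \<Rightarrow> ('a \<Rightarrow> 'a) \<Rightarrow> bool" where
  "has_L2_gradient F \<mu> \<xi> g \<longleftrightarrow> g \<in> L2 \<mu> \<and>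
     (\<forall>\<epsilon>>0. \<exists>\<delta>>0. \<forall>h\<in>L2 \<mu>. l2_norm \<mu> h < \<delta> \<longrightarrow>
        \<bar>F (\<lambda>x. \<xi> x + h x) - F \<xi> - l2_inner \<mu> g h\<bar> \<le> \<epsilon> * l2_norm \<mu> h)"

definition L2_frechet_differentiable :: "(('a::euclidean_space \<Rightarrow> 'a) \<Rightarrow> real) \<Rightarrow> 'a measure \<Rightarrow> bool" where
  "L2_frechet_differentiable F \<mu> \<longleftrightarrow> (\<forall>\<xi>\<in>L2 \<mu>. \<exists>g. has_L2_gradient F \<mu> \<xi> g)"

definition L2_grad :: "(('a::euclidean_space \<Rightarrow> 'a) \<Rightarrow> real) \<Rightarrow> 'a measure \<Rightarrow> ('a \<Rightarrow> 'a) \<Rightarrow> ('a \<Rightarrow> 'a)" where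
  "L2_grad F \<mu> \<xi> = (SOME g. has_L2_gradient F \<mu> \<xi> g)"

definition L2_lambda_convex :: "real \<Rightarrow> (('a::euclidean_space \<Rightarrow> 'a) \<Rightarrow> real) \<Rightarrow> 'a measure \<Rightarrow> bool" where
  "L2_lambda_convex lam F \<mu> \<longleftrightarrow> (\<forall>\<xi>1\<in>L2 \<mu>. \<forall>\<xi>2\<in>L2 \<mu>. \<forall>t\<in>{0..1}.
     F (\<lambda>x. (1 - t) *\<^sub>R \<xi>1 x + t *\<^sub>R \<xi>2 x)
       \<le> (1 - t) * F \<xi>1 + t * F \<xi>2 - lam / 2 * t * (1 - t) * (l2_norm \<mu> (\<lambda>x. \<xi>1 x - \<xi>2 x))\<^sup>2)"

definition L2_bounded_below :: "(('a::euclidean_space \<Rightarrow> 'a) \<Rightarrow> real) \<Rightarrow> 'a measure \<Rightarrow> bool" where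
  "L2_bounded_below F \<mu> \<longleftrightarrow> (\<exists>c. \<forall>\<xi>\<in>L2 \<mu>. c \<le> F \<xi>)"

definition Phi :: "('a::euclidean_space measure \<Rightarrow> real) \<Rightarrow> real \<Rightarrow> 'a measure \<Rightarrow> ('a \<Rightarrow> 'a) \<Rightarrow> ('a \<Rightarrow> 'a) \<Rightarrow> real" where
  "Phi \<phi> \<tau> \<mu> v \<xi> = 1/2 * (lift \<phi> \<mu> \<xi> + l2_inner \<mu> (L2_grad (lift \<phi> \<mu>) \<mu> v) \<xi>)
      + 1 / (2 * \<tau>) * (l2_norm \<mu> (\<lambda>x. \<xi> x - v x))\<^sup>2"

definition lambda_tau :: "real \<Rightarrow> real \<Rightarrow> real" where
  "lambda_tau lam \<tau> = 1 / (2 * \<tau>) * ln ((1 + lam * \<tau>) / (1 - lam * \<tau>))"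

definition C_const :: "real \<Rightarrow> real \<Rightarrow> real" where
  "C_const lam \<tau> = (if lam \<ge> 0 then 1 else exp (2 * \<bar>lambda_tau lam \<tau>\<bar> * \<tau>))"

end

theory Submission
  imports Defs
begin

lemma ip_integrable:
  assumes "f \<in> L2 \<mu>" "g \<in> L2 \<mu>"
  shows "integrable \<mu> (\<lambda>x. inner (f x) (g x))"
proof (rule Bochner_Integration.integrable_bound[where f = "\<lambda>x. (norm (f x))\<^sup>2 + (norm (g x))\<^sup>2"])
  show "integrable \<mu> (\<lambda>x. (norm (f x))\<^sup>2 + (norm (g x))\<^sup>2)" using assms unfolding L2_def by auto
  show "(\<lambda>x. inner (f x) (g x)) \<in> borel_measurable \<mu>" using assms unfolding L2_def by auto
  show "AE x in \<mu>. norm (inner (f x) (g x)) \<le> norm ((norm (f x))\<^sup>2 + (norm (g x))\<^sup>2)"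
  proof (rule AE_I2)
    fix x
    have "\<bar>inner (f x) (g x)\<bar> \<le> norm (f x) * norm (g x)" by (rule Cauchy_Schwarz_ineq2)
    also have "\<dots> \<le> (norm (f x))\<^sup>2 + (norm (g x))\<^sup>2"
    proof -
      have "2 * norm (f x) * norm (g x) \<le> (norm (f x))\<^sup>2 + (norm (g x))\<^sup>2" by (rule sum_squares_bound)
      moreover have "0 \<le> norm (f x) * norm (g x)" by simp
      ultimately show ?thesis by linarith
    qed
    finally show "norm (inner (f x) (g x)) \<le> norm ((norm (f x))\<^sup>2 + (norm (g x))\<^sup>2)" by simp
  qed
qed

lemma L2_comb:
  assumes "f \<in> L2 \<mu>" "g \<in> L2 \<mu>"
  shows "(\<lambda>x. f x + t *\<^sub>R g x) \<in> L2 \<mu>"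
proof -
  have e: "(\<lambda>x. (norm (f x + t *\<^sub>R g x))\<^sup>2) = (\<lambda>x. inner (f x) (f x) + (2*t) * inner (f x) (g x) + t\<^sup>2 * inner (g x) (g x))"
    by (rule ext, simp only: power2_norm_eq_inner)
       (simp add: inner_add_left inner_add_right inner_commute power2_eq_square algebra_simps)
  have "integrable \<mu> (\<lambda>x. inner (f x) (f x) + (2*t) * inner (f x) (g x) + t\<^sup>2 * inner (g x) (g x))"
    using ip_integrable[OF assms(1) assms(1)] ip_integrable[OF assms(1) assms(2)] ip_integrable[OF assms(2) assms(2)]
    by auto
  hence "integrable \<mu> (\<lambda>x. (norm (f x + t *\<^sub>R g x))\<^sup>2)" by (subst e)
  thus ?thesis using assms unfolding L2_def by auto
qed

lemma L2_scale:
  assumes "g \<in> L2 \<mu>"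
  shows "(\<lambda>x. t *\<^sub>R g x) \<in> L2 \<mu>"
proof -
  have e: "(\<lambda>x. (norm (t *\<^sub>R g x))\<^sup>2) = (\<lambda>x. t\<^sup>2 * (norm (g x))\<^sup>2)"
    by (auto simp: power_mult_distrib)
  have "integrable \<mu> (\<lambda>x. t\<^sup>2 * (norm (g x))\<^sup>2)" using assms unfolding L2_def by auto
  hence "integrable \<mu> (\<lambda>x. (norm (t *\<^sub>R g x))\<^sup>2)" by (simp only: e)
  thus ?thesis using assms unfolding L2_def by auto
qed

lemma ip_comb_left:
  assumes "f \<in> L2 \<mu>" "g \<in> L2 \<mu>" "h \<in> L2 \<mu>"
  shows "l2_inner \<mu> (\<lambda>x. f x + t *\<^sub>R g x) h = l2_inner \<mu> f h + t * l2_inner \<mu> g h"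
  using ip_integrable[OF assms(1) assms(3)] ip_integrable[OF assms(2) assms(3)]
  unfolding l2_inner_def by (simp add: inner_add_left)

lemma ip_scale_right:
  "l2_inner \<mu> g (\<lambda>x. t *\<^sub>R h x) = t * l2_inner \<mu> g h"
  unfolding l2_inner_def by simp

lemma ip_scale_left:
  "l2_inner \<mu> (\<lambda>x. t *\<^sub>R h x) g = t * l2_inner \<mu> h g"
  unfolding l2_inner_def by simp

lemma ip_comm: "l2_inner \<mu> f g = l2_inner \<mu> g f"
  unfolding l2_inner_def by (simp add: inner_commute)

lemma ip_nonneg: "0 \<le> l2_inner \<mu> f f"
  unfolding l2_inner_def by (rule integral_nonneg_AE) auto

lemma norm_sq: "(l2_norm \<mu> f)\<^sup>2 = l2_inner \<mu> f f"
  unfolding l2_norm_def using ip_nonneg by simp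

lemma ip_quad:
  assumes "f \<in> L2 \<mu>" "g \<in> L2 \<mu>"
  shows "l2_inner \<mu> (\<lambda>x. f x + t *\<^sub>R g x) (\<lambda>x. f x + t *\<^sub>R g x)
     = l2_inner \<mu> f f + 2 * t * l2_inner \<mu> f g + t\<^sup>2 * l2_inner \<mu> g g"
proof -
  have c: "(\<lambda>x. f x + t *\<^sub>R g x) \<in> L2 \<mu>" using L2_comb assms by blast
  have "l2_inner \<mu> (\<lambda>x. f x + t *\<^sub>R g x) (\<lambda>x. f x + t *\<^sub>R g x)
     = l2_inner \<mu> f (\<lambda>x. f x + t *\<^sub>R g x) + t * l2_inner \<mu> g (\<lambda>x. f x + t *\<^sub>R g x)"
    using ip_comb_left[OF assms c] .
  also have "\<dots> = l2_inner \<mu> (\<lambda>x. f x + t *\<^sub>R g x) f + t * l2_inner \<mu> (\<lambda>x. f x + t *\<^sub>R g x) g"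
    by (simp add: ip_comm)
  also have "\<dots> = l2_inner \<mu> f f + t * l2_inner \<mu> g f + t * (l2_inner \<mu> f g + t * l2_inner \<mu> g g)"
    using ip_comb_left[OF assms assms(1)] ip_comb_left[OF assms assms(2)] by simp
  finally show ?thesis by (simp add: ip_comm[of \<mu> g f] power2_eq_square algebra_simps)
qed

lemma dir:
  assumes "has_L2_gradient F \<mu> \<xi> g" "h \<in> L2 \<mu>" "e > 0"
  shows "\<exists>t0>0. \<forall>t. 0 < t \<and> t < t0 \<longrightarrow>
     \<bar>F (\<lambda>x. \<xi> x + t *\<^sub>R h x) - F \<xi> - t * l2_inner \<mu> g h\<bar> \<le> e * t"
proof -
  define N where "N = l2_norm \<mu> h"
  have N0: "N \<ge> 0" unfolding N_def l2_norm_def using ip_nonneg by simp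
  have "e / (N+1) > 0" using N0 assms(3) by simp
  then obtain \<delta> where d: "\<delta> > 0" and D: "\<forall>k\<in>L2 \<mu>. l2_norm \<mu> k < \<delta> \<longrightarrow>
        \<bar>F (\<lambda>x. \<xi> x + k x) - F \<xi> - l2_inner \<mu> g k\<bar> \<le> e / (N+1) * l2_norm \<mu> k"
    using assms(1) unfolding has_L2_gradient_def by blast
  show ?thesis
  proof (intro exI[of _ "\<delta> / (N+1)"] conjI allI impI)
    show "\<delta> / (N+1) > 0" using d N0 by simp
    fix t :: real assume t: "0 < t \<and> t < \<delta> / (N+1)"
    have nt: "l2_norm \<mu> (\<lambda>x. t *\<^sub>R h x) = t * N"
      unfolding l2_norm_def N_def ip_scale_right ip_scale_left
      using t by (simp add: real_sqrt_mult)
    have "t * N \<le> t * (N+1)" using t by simp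
    also have "\<dots> < \<delta>" using t N0 by (simp add: pos_less_divide_eq mult.commute)
    finally have "l2_norm \<mu> (\<lambda>x. t *\<^sub>R h x) < \<delta>" using nt by simp
    from D[rule_format, OF L2_scale[OF assms(2)] this]
    have "\<bar>F (\<lambda>x. \<xi> x + t *\<^sub>R h x) - F \<xi> - t * l2_inner \<mu> g h\<bar> \<le> e / (N+1) * (t * N)"
      using nt ip_scale_right by metis
    also have "\<dots> \<le> e * t"
    proof -
      have "N / (N+1) \<le> 1" using N0 by simp
      hence "e * t * (N / (N+1)) \<le> e * t * 1" using assms(3) t by (intro mult_left_mono) auto
      thus ?thesis by simp
    qed
    finally show "\<bar>F (\<lambda>x. \<xi> x + t *\<^sub>R h x) - F \<xi> - t * l2_inner \<mu> g h\<bar> \<le> e * t" .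
  qed
qed



lemma mono_step:
  assumes conv: "L2_lambda_convex lam F \<mu>" and g1: "has_L2_gradient F \<mu> \<xi>1 g"
    and x1: "\<xi>1 \<in> L2 \<mu>" and x2: "\<xi>2 \<in> L2 \<mu>"
  shows "l2_inner \<mu> g (\<lambda>x. \<xi>2 x + (-1) *\<^sub>R \<xi>1 x) \<le> F \<xi>2 - F \<xi>1
     - lam / 2 * l2_inner \<mu> (\<lambda>x. \<xi>2 x + (-1) *\<^sub>R \<xi>1 x) (\<lambda>x. \<xi>2 x + (-1) *\<^sub>R \<xi>1 x)"
proof -
  define h where "h = (\<lambda>x. \<xi>2 x + (-1) *\<^sub>R \<xi>1 x)"
  have hL: "h \<in> L2 \<mu>" unfolding h_def by (rule L2_comb[OF x2 x1])
  define M where "M = l2_inner \<mu> h h"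
  define G where "G = l2_inner \<mu> g h"
  have M0: "M \<ge> 0" unfolding M_def by (rule ip_nonneg)
  have "G \<le> F \<xi>2 - F \<xi>1 - lam / 2 * M"
  proof (rule field_le_epsilon)
    fix e :: real assume e: "e > 0"
    obtain t0 where t0: "t0 > 0" and T: "\<forall>t. 0 < t \<and> t < t0 \<longrightarrow>
     \<bar>F (\<lambda>x. \<xi>1 x + t *\<^sub>R h x) - F \<xi>1 - t * l2_inner \<mu> g h\<bar> \<le> (e/2) * t"
      using dir[OF g1 hL, of "e/2"] e by auto
    define t where "t = min (t0/2) (min (1/2) ((e/2) / (\<bar>lam\<bar> * M + 1)))"
    have pos: "\<bar>lam\<bar> * M + 1 > 0" using M0 by (simp add: add_nonneg_pos)
    have tpos: "t > 0" unfolding t_def using t0 e pos by simp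
    have tt0: "t < t0" unfolding t_def using t0 by simp
    have t1: "t \<le> 1" unfolding t_def by simp
    have te: "t * (\<bar>lam\<bar> * M + 1) \<le> e/2"
    proof -
      have "t \<le> (e/2) / (\<bar>lam\<bar> * M + 1)" unfolding t_def by simp
      thus ?thesis by (subst (asm) pos_le_divide_eq[OF pos])
    qed
    have lt: "lam * t * M \<le> e/2"
    proof -
      have "lam * t * M \<le> \<bar>lam\<bar> * t * M" using tpos M0
        by (intro mult_right_mono) (auto simp: abs_ge_self)
      also have "\<dots> \<le> t * (\<bar>lam\<bar> * M + 1)" using tpos by (simp add: algebra_simps)
      finally show ?thesis using te by linarith
    qed
    have fe: "(\<lambda>x. (1 - t) *\<^sub>R \<xi>1 x + t *\<^sub>R \<xi>2 x) = (\<lambda>x. \<xi>1 x + t *\<^sub>R h x)"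
      unfolding h_def by (rule ext) (simp add: algebra_simps)
    have ne: "(\<lambda>x. \<xi>1 x - \<xi>2 x) = (\<lambda>x. (-1) *\<^sub>R h x)"
      unfolding h_def by (rule ext) (simp add: algebra_simps)
    have nM: "(l2_norm \<mu> (\<lambda>x. \<xi>1 x - \<xi>2 x))\<^sup>2 = M"
      unfolding norm_sq ne ip_scale_left ip_scale_right M_def by simp
    have C: "F (\<lambda>x. \<xi>1 x + t *\<^sub>R h x) \<le> (1 - t) * F \<xi>1 + t * F \<xi>2 - lam / 2 * t * (1 - t) * M"
      using conv x1 x2 tpos t1 unfolding L2_lambda_convex_def fe[symmetric] nM[symmetric] by auto
    have D: "t * G - (e/2) * t \<le> F (\<lambda>x. \<xi>1 x + t *\<^sub>R h x) - F \<xi>1"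
    proof -
      have "\<bar>F (\<lambda>x. \<xi>1 x + t *\<^sub>R h x) - F \<xi>1 - t * l2_inner \<mu> g h\<bar> \<le> (e/2) * t"
        using T tpos tt0 by blast
      thus ?thesis unfolding G_def by linarith
    qed
    have "t * G - (e/2) * t \<le> t * (F \<xi>2 - F \<xi>1) - lam / 2 * t * (1 - t) * M"
      using C D by (simp add: algebra_simps)
    moreover have "t * (G - (F \<xi>2 - F \<xi>1 - lam / 2 * M) - e/2 - lam * t * M / 2)
       = (t * G - (e/2) * t) - (t * (F \<xi>2 - F \<xi>1) - lam / 2 * t * (1 - t) * M)"
      by (simp add: field_simps)
    ultimately have "t * (G - (F \<xi>2 - F \<xi>1 - lam / 2 * M) - e/2 - lam * t * M / 2) \<le> 0"
      by linarith
    hence "G - (F \<xi>2 - F \<xi>1 - lam / 2 * M) - e/2 - lam * t * M / 2 \<le> 0"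
      using tpos by (simp add: mult_le_0_iff)
    moreover obtain Z where Z: "Z = lam * t * M" by blast
    moreover obtain R where R: "R = F \<xi>2 - F \<xi>1 - lam / 2 * M" by blast
    ultimately have "G - R - e/2 - Z / 2 \<le> 0" "Z \<le> e/2" using lt by simp_all
    hence "G \<le> R + e" using e by linarith
    thus "G \<le> F \<xi>2 - F \<xi>1 - lam / 2 * M + e" using R by simp
  qed
  thus ?thesis unfolding G_def M_def h_def .
qed

lemma opt_step:
  assumes ga: "has_L2_gradient (lift \<phi> \<mu>) \<mu> \<xi>s a"
    and xs: "\<xi>s \<in> L2 \<mu>" and vL: "v \<in> L2 \<mu>" and bL: "L2_grad (lift \<phi> \<mu>) \<mu> v \<in> L2 \<mu>"
    and tau: "\<tau> > 0"
    and minim: "\<forall>\<xi>\<in>L2 \<mu>. Phi \<phi> \<tau> \<mu> v \<xi>s \<le> Phi \<phi> \<tau> \<mu> v \<xi>"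
    and hL: "h \<in> L2 \<mu>"
  shows "0 \<le> l2_inner \<mu> a h + l2_inner \<mu> (L2_grad (lift \<phi> \<mu>) \<mu> v) h
     + 2 / \<tau> * l2_inner \<mu> (\<lambda>x. \<xi>s x + (-1) *\<^sub>R v x) h"
proof -
  define F where "F = lift \<phi> \<mu>"
  define b where "b = L2_grad (lift \<phi> \<mu>) \<mu> v"
  define d where "d = (\<lambda>x. \<xi>s x + (-1) *\<^sub>R v x)"
  have dL: "d \<in> L2 \<mu>" unfolding d_def by (rule L2_comb[OF xs vL])
  define M where "M = l2_inner \<mu> h h"
  have M0: "M \<ge> 0" unfolding M_def by (rule ip_nonneg)
  define S where "S = l2_inner \<mu> a h + l2_inner \<mu> b h + 2 / \<tau> * l2_inner \<mu> d h"
  have PhiE: "Phi \<phi> \<tau> \<mu> v (\<lambda>x. \<xi>s x + t *\<^sub>R h x) - Phi \<phi> \<tau> \<mu> v \<xi>s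
     = 1/2 * (F (\<lambda>x. \<xi>s x + t *\<^sub>R h x) - F \<xi>s) + t/2 * l2_inner \<mu> b h
       + 1/(2*\<tau>) * (2 * t * l2_inner \<mu> d h + t\<^sup>2 * M)" for t
  proof -
    have e1: "(\<lambda>x. \<xi>s x + t *\<^sub>R h x - v x) = (\<lambda>x. d x + t *\<^sub>R h x)"
      unfolding d_def by (rule ext) (simp add: algebra_simps)
    have e2: "(\<lambda>x. \<xi>s x - v x) = d" unfolding d_def by (rule ext) simp
    have n1: "(l2_norm \<mu> (\<lambda>x. \<xi>s x + t *\<^sub>R h x - v x))\<^sup>2 = l2_inner \<mu> d d + 2 * t * l2_inner \<mu> d h + t\<^sup>2 * M"
      unfolding norm_sq e1 M_def by (rule ip_quad[OF dL hL])
    have n2: "(l2_norm \<mu> (\<lambda>x. \<xi>s x - v x))\<^sup>2 = l2_inner \<mu> d d"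
      unfolding norm_sq e2 ..
    have "l2_inner \<mu> b (\<lambda>x. \<xi>s x + t *\<^sub>R h x) = l2_inner \<mu> (\<lambda>x. \<xi>s x + t *\<^sub>R h x) b"
      by (rule ip_comm)
    also have "\<dots> = l2_inner \<mu> \<xi>s b + t * l2_inner \<mu> h b"
      unfolding b_def by (rule ip_comb_left[OF xs hL bL])
    finally have i1: "l2_inner \<mu> b (\<lambda>x. \<xi>s x + t *\<^sub>R h x) = l2_inner \<mu> b \<xi>s + t * l2_inner \<mu> b h"
      by (simp add: ip_comm)
    show ?thesis unfolding Phi_def using n1 n2 i1 unfolding F_def b_def by (simp add: algebra_simps)
  qed
  have "0 \<le> S" 
  proof (rule field_le_epsilon)
    fix e :: real assume e: "e > 0"
    obtain t0 where t0: "t0 > 0" and T: "\<forall>t. 0 < t \<and> t < t0 \<longrightarrow>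
     \<bar>F (\<lambda>x. \<xi>s x + t *\<^sub>R h x) - F \<xi>s - t * l2_inner \<mu> a h\<bar> \<le> (e/2) * t"
      using dir[OF ga hL, of "e/2"] e unfolding F_def by auto
    define t where "t = min (t0/2) ((e/2) * \<tau> / (M + 1))"
    have tpos: "t > 0" unfolding t_def using t0 e tau M0 by simp
    have tt0: "t < t0" unfolding t_def using t0 by simp
    have te: "t * M \<le> (e/2) * \<tau>"
    proof -
      have "t \<le> (e/2) * \<tau> / (M + 1)" unfolding t_def by simp
      moreover have pM: "M + 1 > 0" using M0 by simp
      ultimately have "t * (M + 1) \<le> (e/2) * \<tau>" by (simp only: pos_le_divide_eq[OF pM])
      thus ?thesis using tpos by (simp add: algebra_simps)
    qed
    have tM: "t * M / \<tau> \<le> e/2" using te tau by (simp add: pos_divide_le_eq)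
    have "Phi \<phi> \<tau> \<mu> v \<xi>s \<le> Phi \<phi> \<tau> \<mu> v (\<lambda>x. \<xi>s x + t *\<^sub>R h x)"
      using minim L2_comb[OF xs hL] by blast
    hence P0: "0 \<le> 1/2 * (F (\<lambda>x. \<xi>s x + t *\<^sub>R h x) - F \<xi>s) + t/2 * l2_inner \<mu> b h
       + 1/(2*\<tau>) * (2 * t * l2_inner \<mu> d h + t\<^sup>2 * M)" using PhiE[of t] by linarith
    have D: "F (\<lambda>x. \<xi>s x + t *\<^sub>R h x) - F \<xi>s \<le> t * l2_inner \<mu> a h + (e/2) * t"
    proof -
      have "\<bar>F (\<lambda>x. \<xi>s x + t *\<^sub>R h x) - F \<xi>s - t * l2_inner \<mu> a h\<bar> \<le> (e/2) * t"
        using T tpos tt0 by blast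
      thus ?thesis by linarith
    qed
    have "0 \<le> t/2 * (S + e/2 + t * M / \<tau>)"
    proof -
      obtain ia ib idh Fd where ia: "ia = l2_inner \<mu> a h" and ib: "ib = l2_inner \<mu> b h"
        and idh: "idh = l2_inner \<mu> d h" and Fd: "Fd = F (\<lambda>x. \<xi>s x + t *\<^sub>R h x) - F \<xi>s" by blast
      have P1: "0 \<le> 1/2 * Fd + t/2 * ib + 1/(2*\<tau>) * (2 * t * idh + t\<^sup>2 * M)"
        using P0 ia ib idh Fd by simp
      have D1: "Fd \<le> t * ia + (e/2) * t" using D Fd ia by simp
      have eq1: "t/2 * (S + e/2 + t * M / \<tau>) = t/2*ia + t/2*ib + t/\<tau>*idh + e*t/4 + t\<^sup>2*M/(2*\<tau>)"
        unfolding S_def ia ib idh using tau by (simp add: field_simps power2_eq_square)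
      have eq2: "1/(2*\<tau>) * (2 * t * idh + t\<^sup>2 * M) = t/\<tau>*idh + t\<^sup>2*M/(2*\<tau>)"
        using tau by (simp add: field_simps)
      show ?thesis unfolding eq1 using P1 D1 eq2 by linarith
    qed
    hence "0 \<le> S + e/2 + t * M / \<tau>" using tpos by (simp add: zero_le_mult_iff)
    thus "0 \<le> S + e" using tM by linarith
  qed
  thus ?thesis unfolding S_def b_def d_def .
qed


theorem mainTheorem5:
  fixes \<phi> :: "'a::euclidean_space measure \<Rightarrow> real"
    and \<mu> :: "'a measure" and lam \<tau> :: real and v \<xi>s :: "'a \<Rightarrow> 'a"
  assumes "P2 \<mu>"
    and "L2_frechet_differentiable (lift \<phi> \<mu>) \<mu>"
    and "L2_lambda_convex lam (lift \<phi> \<mu>) \<mu>"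
    and "L2_bounded_below (lift \<phi> \<mu>) \<mu>"
    and "\<tau> > 0" and "lam / 2 + 1 / \<tau> > 0"
    and "v \<in> L2 \<mu>"
    and "lam < 0 \<longrightarrow> \<bar>lam\<bar> * \<tau> < 1"
    and "\<xi>s \<in> L2 \<mu>"
    and "\<forall>\<xi>\<in>L2 \<mu>. Phi \<phi> \<tau> \<mu> v \<xi>s \<le> Phi \<phi> \<tau> \<mu> v \<xi>"
  shows "(l2_norm \<mu> (L2_grad (lift \<phi> \<mu>) \<mu> \<xi>s))\<^sup>2
           \<le> C_const lam \<tau> * (l2_norm \<mu> (L2_grad (lift \<phi> \<mu>) \<mu> v))\<^sup>2"
proof -
  note diff = assms(2) and conv = assms(3) and tau = assms(5) and vL = assms(7)
    and lt = assms(8) and xs = assms(9) and minim = assms(10)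
  define F where "F = lift \<phi> \<mu>"
  define a where "a = L2_grad F \<mu> \<xi>s"
  define b where "b = L2_grad F \<mu> v"
  have "\<exists>g. has_L2_gradient F \<mu> \<xi>s g"
    using diff xs unfolding F_def L2_frechet_differentiable_def by blast
  hence ga: "has_L2_gradient F \<mu> \<xi>s a"
    unfolding a_def L2_grad_def by (rule someI_ex)
  have "\<exists>g. has_L2_gradient F \<mu> v g"
    using diff vL unfolding F_def L2_frechet_differentiable_def by blast
  hence gb: "has_L2_gradient F \<mu> v b"
    unfolding b_def L2_grad_def by (rule someI_ex)
  have aL: "a \<in> L2 \<mu>" using ga unfolding has_L2_gradient_def by blast
  have bL: "b \<in> L2 \<mu>" using gb unfolding has_L2_gradient_def by blast
  define d where "d = (\<lambda>x. \<xi>s x + (-1) *\<^sub>R v x)"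
  have dL: "d \<in> L2 \<mu>" unfolding d_def by (rule L2_comb[OF xs vL])
  have opt: "0 \<le> l2_inner \<mu> a h + l2_inner \<mu> b h + 2 / \<tau> * l2_inner \<mu> d h" if "h \<in> L2 \<mu>" for h
    using opt_step[of \<phi> \<mu> \<xi>s a v \<tau> h] ga xs vL bL tau minim that
    unfolding F_def b_def d_def by blast
  have E: "l2_inner \<mu> a h + l2_inner \<mu> b h + 2 / \<tau> * l2_inner \<mu> d h = 0" if "h \<in> L2 \<mu>" for h
  proof -
    have "0 \<le> l2_inner \<mu> a (\<lambda>x. (-1) *\<^sub>R h x) + l2_inner \<mu> b (\<lambda>x. (-1) *\<^sub>R h x)
        + 2 / \<tau> * l2_inner \<mu> d (\<lambda>x. (-1) *\<^sub>R h x)"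
      by (rule opt[OF L2_scale[OF that]])
    hence "0 \<le> - (l2_inner \<mu> a h + l2_inner \<mu> b h + 2 / \<tau> * l2_inner \<mu> d h)"
      unfolding ip_scale_right by simp
    thus ?thesis using opt[OF that] by linarith
  qed
  define A where "A = l2_inner \<mu> a a"
  define B where "B = l2_inner \<mu> b b"
  define X where "X = l2_inner \<mu> a b"
  define P where "P = l2_inner \<mu> a d"
  define Q where "Q = l2_inner \<mu> b d"
  define D where "D = l2_inner \<mu> d d"
  have Ea: "A + X + 2 / \<tau> * P = 0" using E[OF aL] unfolding A_def X_def P_def
    by (simp add: ip_comm[of \<mu> b a] ip_comm[of \<mu> d a])
  have Eb: "X + B + 2 / \<tau> * Q = 0" using E[OF bL] unfolding B_def X_def Q_def
    by (simp add: ip_comm[of \<mu> d b])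
  have Ed: "P + Q + 2 / \<tau> * D = 0" using E[OF dL] unfolding D_def P_def Q_def .
  have m1: "l2_inner \<mu> a (\<lambda>x. v x + (-1) *\<^sub>R \<xi>s x) \<le> F v - F \<xi>s
     - lam / 2 * l2_inner \<mu> (\<lambda>x. v x + (-1) *\<^sub>R \<xi>s x) (\<lambda>x. v x + (-1) *\<^sub>R \<xi>s x)"
    by (rule mono_step[OF conv[folded F_def] ga xs vL])
  have m2: "l2_inner \<mu> b d \<le> F \<xi>s - F v - lam / 2 * D"
    unfolding d_def D_def by (rule mono_step[OF conv[folded F_def] gb vL xs])
  have vd: "(\<lambda>x. v x + (-1) *\<^sub>R \<xi>s x) = (\<lambda>x. (-1) *\<^sub>R d x)"
    unfolding d_def by (rule ext) (simp add: algebra_simps)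
  have m1': "- P \<le> F v - F \<xi>s - lam / 2 * D"
    using m1 unfolding vd ip_scale_right ip_scale_left P_def D_def by simp
  have mono: "P - Q \<ge> lam * D" using m1' m2 unfolding Q_def by linarith
  have D0: "D \<ge> 0" unfolding D_def by (rule ip_nonneg)
  have ab0: "A - 2 * X + B \<ge> 0"
  proof -
    have "0 \<le> l2_inner \<mu> (\<lambda>x. a x + (-1) *\<^sub>R b x) (\<lambda>x. a x + (-1) *\<^sub>R b x)" by (rule ip_nonneg)
    thus ?thesis unfolding ip_quad[OF aL bL] A_def B_def X_def by simp
  qed
  have PQ: "P - Q = \<tau> / 2 * (B - A)"
  proof -
    have "2 / \<tau> * P - 2 / \<tau> * Q = B - A" using Ea Eb by linarith
    hence "2 / \<tau> * (P - Q) = B - A" by (simp add: right_diff_distrib)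
    thus ?thesis using tau by (simp add: field_simps)
  qed
  have PeQ: "P + Q = - \<tau> / 2 * (A + 2 * X + B)"
  proof -
    have "2 / \<tau> * P + 2 / \<tau> * Q = - (A + 2 * X + B)" using Ea Eb by linarith
    hence "2 / \<tau> * (P + Q) = - (A + 2 * X + B)" by (simp add: distrib_left)
    thus ?thesis using tau by (simp add: field_simps)
  qed
  have DD: "D = \<tau>\<^sup>2 / 4 * (A + 2 * X + B)"
  proof -
    have "2 / \<tau> * D = - (P + Q)" using Ed by linarith
    hence "D = - \<tau> / 2 * (P + Q)" using tau by (simp add: field_simps)
    thus ?thesis unfolding PeQ by (simp add: power2_eq_square field_simps)
  qed
  have normA: "(l2_norm \<mu> (L2_grad (lift \<phi> \<mu>) \<mu> \<xi>s))\<^sup>2 = A"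
    unfolding norm_sq A_def a_def F_def ..
  have normB: "(l2_norm \<mu> (L2_grad (lift \<phi> \<mu>) \<mu> v))\<^sup>2 = B"
    unfolding norm_sq B_def b_def F_def ..
  show ?thesis
  proof (cases "lam \<ge> 0")
    case True
    have "\<tau> / 2 * (B - A) \<ge> 0" using mono PQ True D0 by (metis mult_nonneg_nonneg order_trans)
    hence "B - A \<ge> 0" using tau by (simp add: zero_le_mult_iff)
    thus ?thesis unfolding normA normB C_const_def using True by simp
  next
    case False
    hence lneg: "lam < 0" by simp
    have lt1: "- lam * \<tau> < 1" using lt lneg by simp
    have q1: "1 + lam * \<tau> > 0" using lt1 by simp
    have lt0: "lam * \<tau> < 0" using lneg tau by (simp add: mult_neg_pos)
    have q2: "1 - lam * \<tau> > 0" using lt0 by linarith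
    have "\<tau> / 2 * (B - A) \<ge> lam * (\<tau>\<^sup>2 / 4 * (A + 2 * X + B))" using mono PQ DD by simp
    moreover have "lam * (\<tau>\<^sup>2 / 4 * (A + 2 * X + B)) \<ge> lam * (\<tau>\<^sup>2 / 4 * (2 * A + 2 * B))"
      using lneg ab0 by (intro mult_left_mono_neg mult_left_mono) auto
    moreover have "lam * (\<tau>\<^sup>2 / 4 * (2 * A + 2 * B)) = \<tau> / 2 * (lam * \<tau> * (A + B))"
      by (simp add: power2_eq_square field_simps)
    ultimately have "\<tau> / 2 * (B - A) \<ge> \<tau> / 2 * (lam * \<tau> * (A + B))"
      by linarith
    hence key: "B - A \<ge> lam * \<tau> * (A + B)" using tau by simp
    hence key2: "A * (1 + lam * \<tau>) \<le> B * (1 - lam * \<tau>)" by (simp add: algebra_simps)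
    define q where "q = (1 + lam * \<tau>) / (1 - lam * \<tau>)"
    have qpos: "q > 0" unfolding q_def using q1 q2 by simp
    have qlt: "q < 1" unfolding q_def
      by (subst pos_divide_less_eq[OF q2]) (use lt0 in simp)
    have lnq: "ln q < 0" using qpos qlt by simp
    have "2 * \<bar>lambda_tau lam \<tau>\<bar> * \<tau> = - ln q"
      unfolding lambda_tau_def q_def[symmetric] using tau lnq by (simp add: abs_mult abs_of_neg)
    hence C: "C_const lam \<tau> = (1 - lam * \<tau>) / (1 + lam * \<tau>)"
      unfolding C_const_def using lneg qpos by (simp add: exp_minus q_def)
    have "A \<le> B * (1 - lam * \<tau>) / (1 + lam * \<tau>)" using key2 q1 by (simp add: le_divide_eq)
    thus ?thesis unfolding normA normB C by (simp add: mult.commute)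
  qed
qed

end
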